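(* Let $K\subset[0,1]^N$ be a self-similar sponge. Then for every $x\in(0,1)^N\cap K$, every tangent $T\in\mathrm{Tan}(K,x)$ is locally self-similar.
   Context: A self-similar sponge is the attractor $K$ (unique nonempty compact set with $K=\bigcup_iS_i(K)$) of a system $\{S_i(y)=k^{-1}y+p_i:[0,1]^N\to[0,1]^N\}_{i=1}^m$ with $k\ge2$ an integer and $p_1,\dots,p_m$ distinct points of $\{0,\frac1k,\dots,\frac{k-1}k\}^N$. A set $F\subset\mathbb{R}^N$ is locally self-similar if for all $x,y\in F$ and $\rho_1,\rho_2>0$ there is a similarity $g:\mathbb{R}^N\to\mathbb{R}^N$ such that $g(B(x,\rho_1)\cap F)$ is a subset of $B(y,\rho_2)\cap F$ and is open relative to $F$. With $\mathrm{exc}(A,B)=\sup_{a\in A}\inf_{b\in B}|a-b|$, closed sets $X_m\to X$ (Attouch–Wets) iff for every $r>0$, $\mathrm{exc}(X_m\cap\overline{B}(\mathbf{0},r),X)\to0$ and $\mathrm{exc}(X\cap\overline{B}(\mathbf{0},r),X_m)\to0$; a closed $T\ni\mathbf{0}$ is in $\mathrm{Tan}(K,x)$ if $r_j^{-1}(K-x)\to T$ for some $r_j\downarrow0$. *)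

theory Defs
  imports "HOL-Analysis.Analysis"
begin

definition grid_points :: "nat \<Rightarrow> (real^'n) set" where
  "grid_points k = {p. \<forall>i. \<exists>j::nat. j < k \<and> p $ i = real j / real k}"

definition sponge_map :: "nat \<Rightarrow> real^'n \<Rightarrow> real^'n \<Rightarrow> real^'n" where
  "sponge_map k p y = (1 / real k) *\<^sub>R y + p"

text \<open>K is a self-similar sponge: the attractor (unique nonempty compact set with
  K = union of S_i(K)) of the system indexed by the finite set P of distinct grid points.\<close>
definition self_similar_sponge :: "(real^'n) set \<Rightarrow> bool" where
  "self_similar_sponge K \<longleftrightarrow>
     (\<exists>k::nat. \<exists>P. k \<ge> 2 \<and> finite P \<and> P \<noteq> {} \<and> P \<subseteq> grid_points k \<and>
        K \<noteq> {} \<and> compact K \<and> K = (\<Union>p\<in>P. sponge_map k p ` K))"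

definition similarity :: "('a::metric_space \<Rightarrow> 'a) \<Rightarrow> bool" where
  "similarity g \<longleftrightarrow> (\<exists>c>0. \<forall>x y. dist (g x) (g y) = c * dist x y)"

definition locally_self_similar :: "('a::metric_space) set \<Rightarrow> bool" where
  "locally_self_similar F \<longleftrightarrow>
     (\<forall>x\<in>F. \<forall>y\<in>F. \<forall>\<rho>1>0. \<forall>\<rho>2>0. \<exists>g. similarity g \<and>
        g ` (ball x \<rho>1 \<inter> F) \<subseteq> ball y \<rho>2 \<inter> F \<and>
        openin (top_of_set F) (g ` (ball x \<rho>1 \<inter> F)))"

text \<open>Excess exc(A,B) = sup_{a in A} inf_{b in B} |a-b|, valued in [0,inf]
  (sup over empty set is 0, inf over empty set is infinity).\<close>
definition exc :: "('a::metric_space) set \<Rightarrow> 'a set \<Rightarrow> ennreal" where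
  "exc A B = (SUP a\<in>A. INF b\<in>B. ennreal (dist a b))"

definition attouch_wets :: "(nat \<Rightarrow> ('a::real_normed_vector) set) \<Rightarrow> 'a set \<Rightarrow> bool" where
  "attouch_wets X Y \<longleftrightarrow>
     (\<forall>r>0. (\<lambda>m. exc (X m \<inter> cball 0 r) Y) \<longlonglongrightarrow> 0 \<and>
            (\<lambda>m. exc (Y \<inter> cball 0 r) (X m)) \<longlonglongrightarrow> 0)"

definition Tan :: "('a::real_normed_vector) set \<Rightarrow> 'a \<Rightarrow> 'a set set" where
  "Tan K x = {T. closed T \<and> 0 \<in> T \<and>
     (\<exists>r::nat \<Rightarrow> real. (\<forall>j. r j > 0) \<and> decseq r \<and> r \<longlonglongrightarrow> 0 \<and>
        attouch_wets (\<lambda>j. (\<lambda>y. (1 / r j) *\<^sub>R (y - x)) ` K) T)}"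

end

theory Submission
  imports Defs
begin


definition intvec :: "real^'n \<Rightarrow> bool" where "intvec z \<longleftrightarrow> (\<forall>i. z$i \<in> \<int>)"
definition ccube :: "(real^'n) set" where "ccube = {y. \<forall>i. 0 \<le> y$i \<and> y$i \<le> 1}"
definition ocube :: "(real^'n) set" where "ocube = {y. \<forall>i. 0 < y$i \<and> y$i < 1}"



lemma cube_disj:
  assumes "intvec z" "intvec z'" "q \<in> ccube" "w \<in> ocube" "q + z = w + z'"
  shows "z = z'"
proof (rule vec_eq_iff[THEN iffD2], rule allI)
  fix i
  have e: "q$i + z$i = w$i + z'$i" using assms(5) by (metis vector_add_component)
  obtain a where a: "z$i = of_int a" using assms(1) unfolding intvec_def by (meson Ints_cases)
  obtain b where b: "z'$i = of_int b" using assms(2) unfolding intvec_def by (meson Ints_cases)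
  have "0 \<le> q$i" "q$i \<le> 1" using assms(3) unfolding ccube_def by auto
  moreover have "0 < w$i" "w$i < 1" using assms(4) unfolding ocube_def by auto
  ultimately have "of_int a - 1 < (of_int b::real)" "(of_int b::real) < of_int a + 1" using e a b by linarith+
  hence "a - 1 < b" "b < a + 1" by linarith+
  hence "a = b" by linarith
  thus "z$i = z'$i" using a b by simp
qed

lemma norm_ccube: "y \<in> ccube \<Longrightarrow> norm (y::real^'n) \<le> real CARD('n)"
proof -
  assume "y \<in> ccube"
  hence "\<forall>i. \<bar>y$i\<bar> \<le> 1" unfolding ccube_def by auto
  hence "sum (\<lambda>i. \<bar>y$i\<bar>) UNIV \<le> sum (\<lambda>i. 1) (UNIV::'n set)" by (intro sum_mono) auto
  thus ?thesis using norm_le_l1_cart[of y] by simp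
qed




lemma finite_window: "finite {z::real^'n. intvec z \<and> norm z \<le> R}"
proof -
  define S where "S = (of_int ` {-\<lceil>R\<rceil>..\<lceil>R\<rceil>} :: real set)"
  have fS: "finite S" unfolding S_def by simp
  have "{z::real^'n. intvec z \<and> norm z \<le> R} \<subseteq> vec_lambda ` (Pi\<^sub>E UNIV (\<lambda>_. S))"
  proof
    fix z :: "real^'n" assume z: "z \<in> {z. intvec z \<and> norm z \<le> R}"
    have "\<forall>i. z$i \<in> S"
    proof
      fix i
      obtain a where a: "z$i = of_int a" using z unfolding intvec_def by (auto elim: Ints_cases)
      have "\<bar>z$i\<bar> \<le> R" using z component_le_norm_cart[of z i] by auto
      hence "real_of_int \<bar>a\<bar> \<le> R" using a by simp
      hence "real_of_int \<bar>a\<bar> \<le> real_of_int \<lceil>R\<rceil>" using le_of_int_ceiling[of R] by linarith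
      hence "\<bar>a\<bar> \<le> \<lceil>R\<rceil>" by (simp only: of_int_le_iff)
      hence "a \<in> {-\<lceil>R\<rceil>..\<lceil>R\<rceil>}" by (simp add: abs_le_iff)
      thus "z$i \<in> S" unfolding S_def using a by (intro image_eqI[of _ of_int a]) simp_all
    qed
    hence "(\<lambda>i. z$i) \<in> Pi\<^sub>E UNIV (\<lambda>_. S)" by (simp add: PiE_iff)
    moreover have "z = vec_lambda (\<lambda>i. z$i)" by simp
    ultimately show "z \<in> vec_lambda ` (Pi\<^sub>E UNIV (\<lambda>_. S))" by (metis vec_lambda_eta image_eqI)
  qed
  moreover have "finite (Pi\<^sub>E (UNIV::'n set) (\<lambda>_. S))" using fS by (simp add: finite_PiE)
  ultimately show ?thesis by (rule finite_subset[OF _ finite_imageI])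
qed




lemma sponge_sub_cube:
  assumes k: "k \<ge> 2" and P: "P \<subseteq> grid_points k" and cK: "compact K" and ne: "K \<noteq> {}"
    and KP: "K = (\<Union>p\<in>P. sponge_map k p ` (K::(real^'n) set))"
  shows "K \<subseteq> ccube"
proof -
  have "\<forall>y\<in>K. 0 \<le> y$i \<and> y$i \<le> 1" for i
  proof -
    have cI: "compact ((\<lambda>y. y$i) ` K)"
      by (rule compact_continuous_image[OF _ cK]) (intro continuous_intros)
    have neI: "(\<lambda>y. y$i) ` K \<noteq> {}" using ne by simp
    obtain s where s: "s \<in> (\<lambda>y. y$i) ` K" "\<forall>t\<in>(\<lambda>y. y$i) ` K. t \<le> s"
      using compact_attains_sup[OF cI neI] by blast
    obtain s0 where s0: "s0 \<in> (\<lambda>y. y$i) ` K" "\<forall>t\<in>(\<lambda>y. y$i) ` K. s0 \<le> t"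
      using compact_attains_inf[OF cI neI] by blast
    obtain y0 where y0: "y0 \<in> K" "s = y0$i" using s by auto
    obtain p y' where py: "p \<in> P" "y' \<in> K" "y0 = sponge_map k p y'" using y0 KP by blast
    obtain j::nat where j: "j < k" "p$i = real j / real k" using py P unfolding grid_points_def by blast
    have kp: "real k > 0" using k by simp
    have e: "real k * y0$i = y'$i + real j" using py(3) j kp unfolding sponge_map_def
      by (simp add: field_simps)
    have "y'$i \<le> s" using s py by auto
    moreover have "real j \<le> real k - 1" using j by linarith
    ultimately have "(real k - 1) * s \<le> (real k - 1) * 1" using e y0 by (simp add: algebra_simps)
    hence sle: "s \<le> 1" using k by (simp add: mult_le_cancel_left_pos)
    obtain y1 where y1: "y1 \<in> K" "s0 = y1$i" using s0 by auto
    obtain p1 y1' where py1: "p1 \<in> P" "y1' \<in> K" "y1 = sponge_map k p1 y1'" using y1 KP by blast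
    obtain j1::nat where j1: "j1 < k" "p1$i = real j1 / real k" using py1 P unfolding grid_points_def by blast
    have e1: "real k * y1$i = y1'$i + real j1" using py1(3) j1 kp unfolding sponge_map_def
      by (simp add: field_simps)
    have "s0 \<le> y1'$i" using s0 py1 by auto
    hence "(real k - 1) * 0 \<le> (real k - 1) * s0" using e1 y1 by (simp add: algebra_simps)
    hence s0ge: "0 \<le> s0" using k by (simp add: zero_le_mult_iff)
    show ?thesis using s s0 sle s0ge by force
  qed
  thus ?thesis unfolding ccube_def by blast
qed

primrec addr :: "nat \<Rightarrow> (real^'n) set \<Rightarrow> nat \<Rightarrow> (real^'n) set" where
  "addr k P 0 = {0}"
| "addr k P (Suc n) = (\<lambda>(a,p). real k *\<^sub>R a + real k *\<^sub>R p) ` (addr k P n \<times> P)"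

lemma addr_props:
  assumes P: "P \<subseteq> grid_points k" and k: "k \<ge> 1"
  shows "a \<in> addr k P n \<Longrightarrow> intvec a \<and> (\<forall>i. 0 \<le> a$i \<and> a$i \<le> real k ^ n - 1)"
proof (induction n arbitrary: a)
  case 0 thus ?case by (simp add: intvec_def)
next
  case (Suc n)
  then obtain b p where bp: "b \<in> addr k P n" "p \<in> P" "a = real k *\<^sub>R b + real k *\<^sub>R p" by auto
  have IH: "intvec b" "\<And>i. 0 \<le> b$i \<and> b$i \<le> real k ^ n - 1" using Suc.IH[OF bp(1)] by auto
  have "intvec a \<and> 0 \<le> a$i \<and> a$i \<le> real k ^ Suc n - 1" for i
  proof -
    obtain j::nat where j: "j < k" "p$i = real j / real k" using bp P unfolding grid_points_def by blast
    have kp: "real k > 0" using k by simp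
    have ai: "a$i = real k * b$i + real j" using bp(3) j kp by simp
    have "real k * b$i \<le> real k * (real k ^ n - 1)" using IH(2)[of i] kp by (simp add: mult_left_mono)
    moreover have "real j \<le> real k - 1" using j by linarith
    ultimately have up: "a$i \<le> real k ^ Suc n - 1" using ai by (simp add: algebra_simps)
    have "0 \<le> a$i" using ai IH(2)[of i] kp by simp
    moreover have "intvec a" unfolding intvec_def
    proof
      fix i'
      obtain j'::nat where j': "j' < k" "p$i' = real j' / real k" using bp P unfolding grid_points_def by blast
      have "a$i' = real k * b$i' + real j'" using bp(3) j' kp by simp
      thus "a$i' \<in> \<int>" using IH(1) unfolding intvec_def by simp
    qed
    ultimately show ?thesis using up by simp
  qed
  thus ?case by simp
qed

lemma addr_in:
  assumes KP: "K = (\<Union>p\<in>P. sponge_map k p ` K)" and k: "k \<ge> 1"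
  shows "a \<in> addr k P n \<Longrightarrow> y \<in> K \<Longrightarrow> (1 / real k ^ n) *\<^sub>R (y + a) \<in> K"
proof (induction n arbitrary: a y)
  case 0 thus ?case by simp
next
  case (Suc n)
  then obtain b p where bp: "b \<in> addr k P n" "p \<in> P" "a = real k *\<^sub>R b + real k *\<^sub>R p" by auto
  have kp: "real k > 0" using k by simp
  have "sponge_map k p y \<in> K" using KP bp Suc.prems by blast
  hence "(1 / real k ^ n) *\<^sub>R (sponge_map k p y + b) \<in> K" using Suc.IH[OF bp(1)] by blast
  moreover have "(1 / real k ^ n) *\<^sub>R (sponge_map k p y + b) = (1 / real k ^ Suc n) *\<^sub>R (y + a)"
    using kp unfolding bp(3) sponge_map_def by (simp add: algebra_simps)
  ultimately show ?case by simp
qed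

lemma addr_cover:
  assumes KP: "K = (\<Union>p\<in>P. sponge_map k p ` K)" and k: "k \<ge> 1"
  shows "u \<in> K \<Longrightarrow> \<exists>a\<in>addr k P n. \<exists>y\<in>K. u = (1 / real k ^ n) *\<^sub>R (y + a)"
proof (induction n arbitrary: u)
  case 0 show ?case using 0 by (intro bexI[of _ 0] bexI[of _ u]) simp_all
next
  case (Suc n)
  then obtain b y where bq: "b \<in> addr k P n" "y \<in> K" "u = (1 / real k ^ n) *\<^sub>R (y + b)" by blast
  obtain p y' where py: "p \<in> P" "y' \<in> K" "y = sponge_map k p y'" using bq(2) KP by blast
  have kp: "real k > 0" using k by simp
  have "real k *\<^sub>R b + real k *\<^sub>R p \<in> addr k P (Suc n)" using bq(1) py(1) by auto
  moreover have "u = (1 / real k ^ Suc n) *\<^sub>R (y' + (real k *\<^sub>R b + real k *\<^sub>R p))"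
    using kp unfolding bq(3) py(3) sponge_map_def by (simp add: algebra_simps)
  ultimately show ?case using py(2) by blast
qed




lemma exc_small:
  assumes "exc A B < ennreal e" "a \<in> A"
  shows "\<exists>b\<in>B. dist a b < e"
proof -
  have "(INF b\<in>B. ennreal (dist a b)) \<le> exc A B" unfolding exc_def using assms(2) by (rule SUP_upper)
  hence "(INF b\<in>B. ennreal (dist a b)) < ennreal e" using assms(1) by (rule le_less_trans)
  then obtain b where "b \<in> B" "ennreal (dist a b) < ennreal e" by (auto simp: INF_less_iff)
  thus ?thesis by (auto simp: ennreal_less_iff)
qed

lemma exc_ev:
  assumes "(\<lambda>m. exc (A m) (B m)) \<longlonglongrightarrow> 0" "e > 0"
  shows "\<exists>N. \<forall>m\<ge>N. \<forall>a\<in>A m. \<exists>b\<in>B m. dist a b < e"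
proof -
  have "eventually (\<lambda>m. exc (A m) (B m) < ennreal e) sequentially"
    using assms(1) by (rule order_tendstoD(2)) (simp add: assms(2))
  then obtain N where "\<forall>m\<ge>N. exc (A m) (B m) < ennreal e" by (auto simp: eventually_sequentially)
  thus ?thesis using exc_small by blast
qed

lemma pow_bracket:
  assumes k: "(k::real) > 1" and y: "y \<ge> 1"
  shows "\<exists>n. k ^ n \<le> y \<and> y < k ^ Suc n"
proof -
  obtain N where N: "y < k ^ N" using real_arch_pow[OF k] by blast
  define L where "L = (LEAST N. y < k ^ N)"
  have L: "y < k ^ L" unfolding L_def using N by (rule LeastI)
  have L0: "L \<noteq> 0"
  proof
    assume "L = 0" with L y show False by simp
  qed
  then obtain n where n: "L = Suc n" by (cases L) auto
  have "\<not> y < k ^ n" using not_less_Least[of n "\<lambda>N. y < k ^ N"] n unfolding L_def by simp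
  thus ?thesis using L n by (intro exI[of _ n]) (auto simp: not_less)
qed

definition aff :: "real \<Rightarrow> 'a::real_normed_vector \<Rightarrow> 'a \<Rightarrow> 'a" where
  "aff c d y = c *\<^sub>R (y + d)"

lemma similarity_aff: "c > 0 \<Longrightarrow> similarity (aff c d)"
  unfolding similarity_def dist_norm aff_def
  by (rule exI[of _ c]) (auto simp: scaleR_diff_right[symmetric])

lemma similarity_comp: "similarity f \<Longrightarrow> similarity g \<Longrightarrow> similarity (\<lambda>y. f (g y))"
proof -
  assume "similarity f" "similarity g"
  then obtain c1 c2 where c: "c1 > 0" "\<forall>x y. dist (f x) (f y) = c1 * dist x y"
    "c2 > 0" "\<forall>x y. dist (g x) (g y) = c2 * dist x y" unfolding similarity_def by blast
  show ?thesis unfolding similarity_def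
    by (rule exI[of _ "c1 * c2"]) (simp add: c mult.assoc)
qed

lemma image_aff_ball:
  assumes "c > 0"
  shows "aff c d ` ball a \<rho> = ball (aff c d a) (c * \<rho>)"
proof
  show "aff c d ` ball a \<rho> \<subseteq> ball (aff c d a) (c * \<rho>)"
    using assms by (auto simp: aff_def dist_norm scaleR_diff_right[symmetric])
next
  show "ball (aff c d a) (c * \<rho>) \<subseteq> aff c d ` ball a \<rho>"
  proof
    fix u assume u: "u \<in> ball (aff c d a) (c * \<rho>)"
    define y where "y = (1/c) *\<^sub>R u - d"
    have uy: "u = aff c d y" using assms unfolding y_def aff_def by simp
    have "norm (c *\<^sub>R (a - y)) < c * \<rho>" using u by (simp add: uy aff_def dist_norm scaleR_diff_right algebra_simps)
    hence "dist a y < \<rho>" using assms by (simp add: dist_norm)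
    thus "u \<in> aff c d ` ball a \<rho>" using uy by auto
  qed
qed

lemma aff_inj: "c \<noteq> 0 \<Longrightarrow> aff c d u = aff c d w \<longleftrightarrow> u = w"
  unfolding aff_def by simp

lemma open_ocube: "open (ocube :: (real^'n) set)"
proof -
  have eq: "ocube = (\<Inter>i. {x::real^'n. x$i > 0} \<inter> {x. x$i < 1})" unfolding ocube_def by auto
  show ?thesis unfolding eq by (intro open_INT ballI open_Int open_halfspace_component_gt_cart open_halfspace_component_lt_cart) simp
qed

lemma ocube_ccube: "ocube \<subseteq> ccube" unfolding ocube_def ccube_def by (blast intro: less_imp_le)

lemma norm_diff_ccube:
  assumes "u \<in> ccube" "w \<in> ccube" shows "norm (u - w :: real^'n) \<le> real CARD('n)"
proof -
  have "\<forall>i. \<bar>(u - w)$i\<bar> \<le> 1"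
  proof
    fix i
    have "0 \<le> u$i" "u$i \<le> 1" "0 \<le> w$i" "w$i \<le> 1" using assms unfolding ccube_def by auto
    thus "\<bar>(u - w)$i\<bar> \<le> 1" by (simp add: abs_le_iff)
  qed
  hence "sum (\<lambda>i. \<bar>(u-w)$i\<bar>) UNIV \<le> sum (\<lambda>i. 1) (UNIV::'n set)" by (intro sum_mono) auto
  thus ?thesis using norm_le_l1_cart[of "u-w"] by simp
qed

lemma cell_ocube:
  assumes "w \<in> ocube" "\<forall>i. 0 \<le> v$i \<and> v$i \<le> real k ^ m - 1" "k \<ge> 1"
  shows "(1 / real k ^ m) *\<^sub>R (w + v) \<in> (ocube :: (real^'n) set)"
  unfolding ocube_def
proof (intro CollectI allI conjI)
  fix i
  have km: "real k ^ m > 0" using assms(3) by simp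
  have "0 < w$i" "w$i < 1" using assms(1) unfolding ocube_def by auto
  moreover have "0 \<le> v$i" "v$i \<le> real k ^ m - 1" using assms(2) by auto
  ultimately have "0 < w$i + v$i" "w$i + v$i < real k ^ m" by linarith+
  thus "0 < ((1 / real k ^ m) *\<^sub>R (w + v))$i" "((1 / real k ^ m) *\<^sub>R (w + v))$i < 1"
    using km by (simp_all add: field_simps)
qed

lemma repr_alg:
  fixes q a D x :: "real^'n"
  assumes "r > 0" "K > 0"
  shows "(1 / r) *\<^sub>R ((1 / K) *\<^sub>R (q + a) - x) = (1 / (r * K)) *\<^sub>R (q + (a - D) - (K *\<^sub>R x - D))"
proof -
  have e1: "q + (a - D) - (K *\<^sub>R x - D) = (q + a) - K *\<^sub>R x" by (simp add: algebra_simps)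
  have e2: "(1 / (r * K)) * K = 1 / r" using assms by simp
  show ?thesis unfolding e1 scaleR_diff_right scaleR_scaleR e2 by simp
qed



lemma norm3: "norm (u + v + w) \<le> norm u + norm v + norm (w::'a::real_normed_vector)"
  using norm_triangle_ineq[of "u+v" w] norm_triangle_ineq[of u v] by linarith

lemma div_le_self: "0 \<le> a \<Longrightarrow> 1 \<le> L \<Longrightarrow> a / (L::real) \<le> a"
  using divide_left_mono[of 1 L a] by simp




theorem lemma10p3:
  fixes K :: "(real^'n) set" and x :: "real^'n"
  assumes "self_similar_sponge K"
    and "x \<in> K" and "\<forall>i. 0 < x $ i \<and> x $ i < 1"
    and "T \<in> Tan K x"
  shows "locally_self_similar T"
proof -
  obtain k P where k: "k \<ge> 2" and P: "P \<subseteq> grid_points k" and cK: "compact K" and Kne: "K \<noteq> {}"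
    and KP: "K = (\<Union>p\<in>P. sponge_map k p ` K)"
    using assms(1) unfolding self_similar_sponge_def by blast
  have k1: "k \<ge> 1" using k by simp
  have kr: "real k > 1" using k by simp
  have Kc: "K \<subseteq> ccube" using sponge_sub_cube[OF k P cK Kne KP] .
  obtain r where rpos: "\<forall>j. r j > 0" and rlim: "r \<longlonglongrightarrow> 0" and clT: "closed T"
    and AW: "attouch_wets (\<lambda>j. (\<lambda>y. (1 / r j) *\<^sub>R (y - x)) ` K) T"
    using assms(4) unfolding Tan_def by blast
  define X where "X j = (\<lambda>y. (1 / r j) *\<^sub>R (y - x)) ` K" for j
  define C where "C = real CARD('n)"
  have C1: "C \<ge> 1" unfolding C_def by simp
  have normK: "\<And>q. q \<in> K \<Longrightarrow> norm q \<le> C" using Kc norm_ccube unfolding C_def by blast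
  have AW1: "\<exists>N. \<forall>j\<ge>N. \<exists>x'\<in>X j. dist t x' < e" if t: "t \<in> T" and e: "e > 0" for t e
  proof -
    have pos: "norm t + 1 > 0" by (simp add: add_nonneg_pos)
    have "(\<lambda>m. exc (T \<inter> cball 0 (norm t + 1)) (X m)) \<longlonglongrightarrow> 0"
      using AW pos unfolding attouch_wets_def X_def by blast
    from exc_ev[of "\<lambda>m. T \<inter> cball 0 (norm t + 1)" X, OF this e] obtain N where "\<forall>m\<ge>N. \<forall>a\<in>T \<inter> cball 0 (norm t + 1). \<exists>b\<in>X m. dist a b < e" by blast
    thus ?thesis using t by (intro exI[of _ N]) auto
  qed
  have AW2: "\<exists>N. \<forall>j\<ge>N. \<forall>x'\<in>X j. norm x' \<le> R0 \<longrightarrow> (\<exists>t\<in>T. dist x' t < e)" if e: "e > 0" and R0: "R0 > 0" for e R0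
  proof -
    have "(\<lambda>m. exc (X m \<inter> cball 0 R0) T) \<longlonglongrightarrow> 0"
      using AW R0 unfolding attouch_wets_def X_def by blast
    from exc_ev[of "\<lambda>m. X m \<inter> cball 0 R0" "\<lambda>m. T", OF this e] obtain N where "\<forall>m\<ge>N. \<forall>a\<in>X m \<inter> cball 0 R0. \<exists>b\<in>T. dist a b < e" by blast
    thus ?thesis by (intro exI[of _ N]) auto
  qed
  have "\<forall>j. \<exists>nn. r j \<le> 1 \<longrightarrow> real k ^ nn \<le> 1 / r j \<and> 1 / r j < real k ^ Suc nn"
  proof
    fix j
    show "\<exists>nn. r j \<le> 1 \<longrightarrow> real k ^ nn \<le> 1 / r j \<and> 1 / r j < real k ^ Suc nn"
    proof (cases "r j \<le> 1")
      case True
      hence "1 / r j \<ge> 1" using rpos by simp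
      thus ?thesis using pow_bracket[OF kr] by blast
    qed auto
  qed
  from choice[OF this] obtain n where n0: "\<forall>j. r j \<le> 1 \<longrightarrow> real k ^ n j \<le> 1 / r j \<and> 1 / r j < real k ^ Suc (n j)"
    by blast
  have n: "real k ^ n j \<le> 1 / r j" "1 / r j < real k ^ Suc (n j)" if "r j \<le> 1" for j
    using n0 that by auto
  define lam where "lam j = 1 / (r j * real k ^ n j)" for j
  define D :: "nat \<Rightarrow> real^'n" where "D j = (\<chi> i. of_int \<lfloor>real k ^ n j * x$i\<rfloor>)" for j
  define f where "f j = real k ^ n j *\<^sub>R x - D j" for j
  define Zs where "Zs j = (\<lambda>a. a - D j) ` addr k P (n j)" for j
  have kn_pos: "real k ^ m > 0" for m using k by simp
  have lam_pos: "lam j > 0" for j unfolding lam_def using rpos kn_pos by simp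
  have lam_alt: "lam j = (1 / r j) / real k ^ n j" for j unfolding lam_def by simp
  have lam_le: "lam j \<le> real k" for j
  proof (cases "r j \<le> 1")
    case True
    have rj: "r j > 0" using rpos by simp
    have "1 / r j < real k * real k ^ n j" using n(2)[OF True] by simp
    hence "1 < real k * real k ^ n j * r j" using rj by (simp add: divide_less_eq)
    hence "1 \<le> real k * (r j * real k ^ n j)" by (simp add: algebra_simps)
    thus ?thesis unfolding lam_def using rj kn_pos[of "n j"] by (simp add: divide_le_eq)
  next
    case False
    have "1 * 1 \<le> r j * real k ^ n j"
      using False k1 by (intro mult_mono) (auto simp: one_le_power)
    hence "lam j \<le> 1" unfolding lam_def using rpos kn_pos by (simp add: divide_le_eq)
    thus ?thesis using k by simp
  qed
  have lam_ge: "lam j \<ge> 1" if "r j \<le> 1" for j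
  proof -
    have rj: "r j > 0" using rpos by simp
    have "real k ^ n j * r j \<le> 1" using n(1)[OF that] rj by (simp add: le_divide_eq)
    hence h: "r j * real k ^ n j \<le> 1" by (simp add: mult.commute)
    have p: "r j * real k ^ n j > 0" using rj kn_pos[of "n j"] by simp
    show ?thesis unfolding lam_def using h p by (simp add: le_divide_eq)
  qed
  have inv_kn: "1 / real k ^ n j \<le> real k * r j" if "r j \<le> 1" for j
  proof -
    have rj: "r j > 0" using rpos by simp
    have "1 / r j < real k * real k ^ n j" using n(2)[OF that] by simp
    hence "1 < real k * real k ^ n j * r j" using rj by (simp add: divide_less_eq)
    hence "1 < (real k * r j) * real k ^ n j" by (simp add: algebra_simps)
    thus ?thesis using kn_pos[of "n j"] by (simp add: divide_le_eq)
  qed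
  have f_cube: "f j \<in> ccube" for j
    unfolding ccube_def
  proof (intro CollectI allI)
    fix i
    have e: "f j $ i = real k ^ n j * x$i - of_int \<lfloor>real k ^ n j * x$i\<rfloor>" by (simp add: f_def D_def)
    have "of_int \<lfloor>real k ^ n j * x$i\<rfloor> \<le> real k ^ n j * x$i" by (rule of_int_floor_le)
    moreover have "real k ^ n j * x$i < of_int \<lfloor>real k ^ n j * x$i\<rfloor> + 1" by (rule real_of_int_floor_add_one_gt)
    ultimately show "0 \<le> f j $ i \<and> f j $ i \<le> 1" unfolding e by linarith
  qed
  have normf: "norm (f j) \<le> C" for j using f_cube norm_ccube unfolding C_def by blast
  have D_int: "intvec (D j)" for j unfolding intvec_def D_def by simp
  have Zs_int: "intvec z" if zZ: "z \<in> Zs j" for z j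
  proof -
    obtain a where a: "a \<in> addr k P (n j)" "z = a - D j" using zZ unfolding Zs_def by blast
    have "intvec a" using addr_props[OF P k1 a(1)] by blast
    thus ?thesis using D_int[of j] unfolding a(2) intvec_def by simp
  qed
  have R1: "\<exists>q\<in>K. \<exists>z\<in>Zs j. x' = lam j *\<^sub>R (q + z - f j)" if xX: "x' \<in> X j" for j x'
  proof -
    obtain y where y: "y \<in> K" "x' = (1 / r j) *\<^sub>R (y - x)" using xX unfolding X_def by blast
    obtain a q where aq: "a \<in> addr k P (n j)" "q \<in> K" "y = (1 / real k ^ n j) *\<^sub>R (q + a)"
      using addr_cover[OF KP k1 y(1), of "n j"] by blast
    have "x' = lam j *\<^sub>R (q + (a - D j) - f j)"
      unfolding y(2) aq(3) lam_def f_def using repr_alg[of "r j" "real k ^ n j" q a x "D j"] rpos kn_pos by simp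
    moreover have "a - D j \<in> Zs j" unfolding Zs_def using aq(1) by blast
    ultimately show ?thesis using aq(2) by blast
  qed
  have R2: "lam j *\<^sub>R (q + z - f j) \<in> X j" if qK: "q \<in> K" and zZ: "z \<in> Zs j" for j q z
  proof -
    obtain a where a: "a \<in> addr k P (n j)" "z = a - D j" using zZ unfolding Zs_def by blast
    have yK: "(1 / real k ^ n j) *\<^sub>R (q + a) \<in> K" using addr_in[OF KP k1 a(1) qK] .
    have "lam j *\<^sub>R (q + z - f j) = (1 / r j) *\<^sub>R ((1 / real k ^ n j) *\<^sub>R (q + a) - x)"
      unfolding a(2) lam_def f_def using repr_alg[of "r j" "real k ^ n j" q a x "D j"] rpos kn_pos by simp
    thus ?thesis using yK unfolding X_def by blast
  qed
  define S where "S = {0..real k} \<times> cball (0::real^'n) C"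
  have "seq_compact S" unfolding S_def
    by (intro compact_imp_seq_compact compact_Times compact_Icc compact_cball)
  moreover have "\<forall>j. (lam j, f j) \<in> S" unfolding S_def using lam_pos lam_le normf by (auto simp: less_imp_le)
  ultimately obtain l \<sigma> where l: "l \<in> S" "strict_mono \<sigma>" "((\<lambda>j. (lam j, f j)) \<circ> \<sigma>) \<longlonglongrightarrow> l"
    by (rule seq_compactE)
  obtain lam0 ff where l0: "l = (lam0, ff)" by (cases l)
  have lamlim: "(\<lambda>j. lam (\<sigma> j)) \<longlonglongrightarrow> lam0" using tendsto_fst[OF l(3)] l0 by (simp add: o_def)
  have flim: "(\<lambda>j. f (\<sigma> j)) \<longlonglongrightarrow> ff" using tendsto_snd[OF l(3)] l0 by (simp add: o_def)
  have ffC: "norm ff \<le> C" using l(1) l0 unfolding S_def by simp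
  have rsig: "(\<lambda>j. r (\<sigma> j)) \<longlonglongrightarrow> 0" using LIMSEQ_subseq_LIMSEQ[OF rlim l(2)] by (simp add: o_def)
  have lam0_ge: "lam0 \<ge> 1"
  proof (rule LIMSEQ_le_const[OF lamlim])
    obtain N where N: "\<forall>j\<ge>N. norm (r (\<sigma> j) - 0) < 1" using rsig unfolding LIMSEQ_iff by force
    have "\<forall>j\<ge>N. 1 \<le> lam (\<sigma> j)"
    proof (intro allI impI)
      fix j assume "j \<ge> N"
      hence "r (\<sigma> j) \<le> 1" using N by force
      thus "1 \<le> lam (\<sigma> j)" by (rule lam_ge)
    qed
    thus "\<exists>N. \<forall>j\<ge>N. 1 \<le> lam (\<sigma> j)" by blast
  qed
  show ?thesis unfolding locally_self_similar_def
  proof (intro ballI allI impI)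
    fix a b and \<rho>1 \<rho>2 :: real assume aT: "a \<in> T" and bT: "b \<in> T" and r1: "\<rho>1 > 0" and r2: "\<rho>2 > 0"
    define M where "M = norm a + \<rho>1 + norm b + \<rho>2 + 1"
    have M1: "M \<ge> 1" unfolding M_def using r1 r2 by simp
    define R where "R = M + 1 + 2 * C"
    define W where "W = {z::real^'n. intvec z \<and> norm z \<le> R}"
    have fW: "finite W" unfolding W_def by (rule finite_window)
    define G where "G j = Zs (\<sigma> j) \<inter> W" for j
    have "range G \<subseteq> Pow W" unfolding G_def by auto
    hence "finite (G ` UNIV)" using fW by (meson finite_Pow_iff finite_subset)
    then obtain a0 where "\<not> finite {j\<in>UNIV. G j = G a0}" using pigeonhole_infinite[of UNIV G] by auto
    hence infI: "infinite {j. G j = G a0}" by simp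
    define F where "F = G a0"
    define s where "s = enumerate {j. G j = G a0}"
    have sm: "strict_mono s" unfolding s_def using strict_mono_enumerate[OF infI] .
    have sI: "G (s j) = F" for j unfolding s_def F_def using enumerate_in_set[OF infI] by blast
    define \<tau> where "\<tau> j = \<sigma> (s j)" for j
    have tm: "strict_mono \<tau>" using l(2) sm unfolding \<tau>_def strict_mono_def by blast
    have ZF: "Zs (\<tau> j) \<inter> W = F" for j using sI unfolding G_def \<tau>_def by blast
    have FW: "F \<subseteq> W" using ZF[of 0] by blast
    have FZ: "F \<subseteq> Zs (\<tau> j)" for j using ZF[of j] by blast
    have fF: "finite F" using FW fW by (rule finite_subset)
    have lt: "(\<lambda>j. lam (\<tau> j)) \<longlonglongrightarrow> lam0"
      using LIMSEQ_subseq_LIMSEQ[OF lamlim sm] unfolding \<tau>_def by (simp add: o_def)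
    have ft: "(\<lambda>j. f (\<tau> j)) \<longlonglongrightarrow> ff"
      using LIMSEQ_subseq_LIMSEQ[OF flim sm] unfolding \<tau>_def by (simp add: o_def)
    have rt: "(\<lambda>j. r (\<tau> j)) \<longlonglongrightarrow> 0"
      using LIMSEQ_subseq_LIMSEQ[OF rlim tm] by (simp add: o_def)
    have tge: "\<tau> j \<ge> j" for j using seq_suble[OF tm] .
    define YF where "YF = {lam0 *\<^sub>R (q + z - ff) | q z. q \<in> K \<and> z \<in> F}"
    have lam0p: "lam0 > 0" using lam0_ge by simp
    have key1: "t \<in> YF" if tT: "t \<in> T" and tM: "norm t \<le> M" for t
    proof -
      define KF where "KF = (\<Union>z\<in>F. (\<lambda>q. q + z) ` K)"
      have cKF: "compact KF" unfolding KF_def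
      proof (rule compact_UN[OF fF])
        fix z show "compact ((\<lambda>q. q + z) ` K)"
          by (rule compact_continuous_image[OF _ cK]) (intro continuous_intros)
      qed
      define p where "p = (1 / lam0) *\<^sub>R t + ff"
      have "\<forall>e>0. \<exists>u\<in>KF. dist u p < e"
      proof (intro allI impI)
        fix e :: real assume e: "e > 0"
        have il: "(\<lambda>j. 1 / lam (\<tau> j)) \<longlonglongrightarrow> 1 / lam0" using lam0p by (intro tendsto_intros lt) simp
        have e1: "e / (3 * (M + 1)) > 0" using e M1 by simp
        obtain N1 where N1: "\<forall>j\<ge>N1. dist (1 / lam (\<tau> j)) (1 / lam0) < e / (3 * (M + 1))"
          using il e1 unfolding lim_sequentially by blast
        obtain N2 where N2: "\<forall>j\<ge>N2. dist (f (\<tau> j)) ff < e / 3"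
          using ft e unfolding lim_sequentially by (meson divide_pos_pos zero_less_numeral)
        obtain N3 where N3: "\<forall>j\<ge>N3. dist (r (\<tau> j)) 0 < 1"
          using rt unfolding lim_sequentially by (meson zero_less_one)
        define \<delta> where "\<delta> = min 1 (e / 3)"
        have dp: "\<delta> > 0" unfolding \<delta>_def using e by simp
        obtain N4 where N4: "\<forall>j\<ge>N4. \<exists>x'\<in>X j. dist t x' < \<delta>" using AW1[OF tT dp] by blast
        define j where "j = max (max N1 N2) (max N3 N4)"
        have j1: "dist (1 / lam (\<tau> j)) (1 / lam0) < e / (3 * (M + 1))" using N1 unfolding j_def by simp
        have j2: "dist (f (\<tau> j)) ff < e / 3" using N2 unfolding j_def by simp
        have "dist (r (\<tau> j)) 0 < 1" using N3 unfolding j_def by simp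
        hence j3: "r (\<tau> j) \<le> 1" by (simp add: dist_real_def)
        have "\<tau> j \<ge> N4" using tge[of j] unfolding j_def by linarith
        then obtain x' where x': "x' \<in> X (\<tau> j)" "dist t x' < \<delta>" using N4 by blast
        obtain q z where qz: "q \<in> K" "z \<in> Zs (\<tau> j)" "x' = lam (\<tau> j) *\<^sub>R (q + z - f (\<tau> j))"
          using R1[OF x'(1)] by blast
        define L where "L = lam (\<tau> j)"
        have L1: "L \<ge> 1" unfolding L_def using lam_ge[OF j3] .
        have Lp: "L > 0" using L1 by simp
        have qzx: "q + z = (1 / L) *\<^sub>R x' + f (\<tau> j)" using qz(3) Lp unfolding L_def[symmetric] by simp
        have nx': "norm x' \<le> M + 1"
        proof -
          have "norm x' \<le> norm t + norm (x' - t)" by (rule norm_triangle_sub)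
          hence "norm x' \<le> norm t + dist t x'" by (simp add: dist_norm norm_minus_commute)
          thus ?thesis using tM x'(2) unfolding \<delta>_def by linarith
        qed
        have nLx: "norm ((1 / L) *\<^sub>R x') \<le> M + 1"
        proof -
          have "norm ((1 / L) *\<^sub>R x') = norm x' / L" using Lp by simp
          also have "\<dots> \<le> norm x'" using L1 by (intro div_le_self) simp_all
          finally show ?thesis using nx' by linarith
        qed
        have "z = (1 / L) *\<^sub>R x' + f (\<tau> j) - q" using qzx by (simp add: algebra_simps)
        hence "norm z \<le> norm ((1 / L) *\<^sub>R x') + norm (f (\<tau> j)) + norm q"
          using norm_triangle_ineq4[of "(1 / L) *\<^sub>R x' + f (\<tau> j)" q] norm_triangle_ineq[of "(1 / L) *\<^sub>R x'" "f (\<tau> j)"] by simp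
        hence "norm z \<le> R" using nLx normf[of "\<tau> j"] normK[OF qz(1)] unfolding R_def by linarith
        hence "z \<in> W" unfolding W_def using Zs_int[OF qz(2)] by blast
        hence zF: "z \<in> F" using ZF[of j] qz(2) by blast
        have uKF: "q + z \<in> KF" unfolding KF_def using zF qz(1) by blast
        have "q + z - p = (1 / L) *\<^sub>R (x' - t) + ((1 / L - 1 / lam0) *\<^sub>R t) + (f (\<tau> j) - ff)"
          unfolding qzx p_def by (simp add: algebra_simps)
        hence "dist (q + z) p \<le> norm ((1 / L) *\<^sub>R (x' - t)) + norm ((1 / L - 1 / lam0) *\<^sub>R t) + norm (f (\<tau> j) - ff)"
          unfolding dist_norm by (simp only: norm3)
        moreover have "norm ((1 / L) *\<^sub>R (x' - t)) < e / 3"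
        proof -
          have "norm ((1 / L) *\<^sub>R (x' - t)) = norm (x' - t) / L" using Lp by simp
          also have "\<dots> \<le> norm (x' - t)" using L1 by (intro div_le_self) simp_all
          also have "\<dots> < \<delta>" using x'(2) by (simp add: dist_norm norm_minus_commute)
          finally show ?thesis unfolding \<delta>_def by linarith
        qed
        moreover have "norm ((1 / L - 1 / lam0) *\<^sub>R t) < e / 3"
        proof -
          have "norm ((1 / L - 1 / lam0) *\<^sub>R t) = \<bar>1 / L - 1 / lam0\<bar> * norm t" by simp
          also have "\<dots> \<le> e / (3 * (M + 1)) * M"
            using j1 tM unfolding L_def dist_real_def by (intro mult_mono) auto
          also have "\<dots> < e / 3" using e M1 by (simp add: field_simps)
          finally show ?thesis .
        qed
        moreover have "norm (f (\<tau> j) - ff) < e / 3" using j2 by (simp add: dist_norm)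
        ultimately have "dist (q + z) p < e" by linarith
        thus "\<exists>u\<in>KF. dist u p < e" using uKF by blast
      qed
      hence "p \<in> KF" using closed_approachable[OF compact_imp_closed[OF cKF]] by blast
      then obtain q z where qz: "z \<in> F" "q \<in> K" "p = q + z" unfolding KF_def by blast
      have h: "(1 / lam0) *\<^sub>R t = q + z - ff" using qz(3) unfolding p_def by (simp add: algebra_simps)
      have "t = lam0 *\<^sub>R ((1 / lam0) *\<^sub>R t)" using lam0p by simp
      hence "t = lam0 *\<^sub>R (q + z - ff)" unfolding h .
      thus ?thesis unfolding YF_def using qz by blast
    qed
    have key2: "y \<in> T" if yY: "y \<in> YF" for y
    proof -
      obtain q z where qz: "q \<in> K" "z \<in> F" "y = lam0 *\<^sub>R (q + z - ff)" using yY unfolding YF_def by blast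
      define xs where "xs j = lam (\<tau> j) *\<^sub>R (q + z - f (\<tau> j))" for j
      have xsX: "xs j \<in> X (\<tau> j)" for j unfolding xs_def using R2[OF qz(1)] FZ qz(2) by blast
      have xsl: "xs \<longlonglongrightarrow> y" unfolding xs_def qz(3) by (intro tendsto_intros lt ft)
      have "\<forall>e>0. \<exists>t\<in>T. dist t y < e"
      proof (intro allI impI)
        fix e :: real assume e: "e > 0"
        obtain N1 where N1: "\<forall>j\<ge>N1. dist (xs j) y < e/2" using xsl e unfolding lim_sequentially by (meson half_gt_zero)
        have R0: "norm y + e > 0" using e by (simp add: add_nonneg_pos)
        obtain N2 where N2: "\<forall>j\<ge>N2. \<forall>x'\<in>X j. norm x' \<le> norm y + e \<longrightarrow> (\<exists>t\<in>T. dist x' t < e/2)"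
          using AW2[of "e/2" "norm y + e"] e R0 by auto
        define j where "j = max N1 N2"
        have d: "dist (xs j) y < e/2" using N1 unfolding j_def by simp
        have "norm (xs j) \<le> norm y + dist (xs j) y" by (metis dist_norm norm_triangle_sub add.commute)
        hence nx: "norm (xs j) \<le> norm y + e" using d e by linarith
        have "\<tau> j \<ge> N2" using tge[of j] unfolding j_def by linarith
        then obtain t where t: "t \<in> T" "dist (xs j) t < e/2" using N2 xsX[of j] nx by blast
        have "dist t y \<le> dist t (xs j) + dist (xs j) y" by (rule dist_triangle)
        hence "dist t y < e" using t(2) d by (simp add: dist_commute)
        thus "\<exists>t\<in>T. dist t y < e" using t(1) by blast
      qed
      thus ?thesis using closed_approachable[OF clT] by blast
    qed
    have key: "t \<in> T \<longleftrightarrow> t \<in> YF" if "norm t \<le> M" for t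
      using key1 key2 that by blast
    have bM: "norm b \<le> M" unfolding M_def using r1 r2 by simp
    obtain q0 z0 where q0z0: "q0 \<in> K" "z0 \<in> F" "b = lam0 *\<^sub>R (q0 + z0 - ff)"
      using key1[OF bT bM] unfolding YF_def by blast
    obtain m where m: "(lam0 * C + 1) / \<rho>2 < real k ^ m" using real_arch_pow[OF kr] by blast
    have cellrad: "lam0 * C / real k ^ m < \<rho>2"
    proof -
      have "lam0 * C + 1 < \<rho>2 * real k ^ m" using m r2 by (simp add: divide_less_eq mult.commute)
      hence "lam0 * C < \<rho>2 * real k ^ m" by linarith
      thus ?thesis using kn_pos[of m] by (simp add: divide_less_eq mult.commute)
    qed
    obtain v q1 where vq1: "v \<in> addr k P m" "q1 \<in> K" "q0 = (1 / real k ^ m) *\<^sub>R (q1 + v)"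
      using addr_cover[OF KP k1 q0z0(1), of m] by blast
    have vprops: "intvec v" "\<forall>i. 0 \<le> v$i \<and> v$i \<le> real k ^ m - 1" using addr_props[OF P k1 vq1(1)] by auto
    define h where "h = aff lam0 (z0 - ff)"
    define Sv where "Sv = aff (1 / real k ^ m) v"
    have hS_ball: "h (Sv u) \<in> ball b \<rho>2" if uc: "u \<in> ccube" for u
    proof -
      have "h (Sv u) - b = (lam0 / real k ^ m) *\<^sub>R (u - q1)"
        unfolding h_def Sv_def aff_def q0z0(3) vq1(3) by (simp add: algebra_simps)
      hence "norm (b - h (Sv u)) = norm ((lam0 / real k ^ m) *\<^sub>R (u - q1))" by (metis norm_minus_commute)
      also have "\<dots> = (lam0 / real k ^ m) * norm (u - q1)" using lam0p kn_pos[of m] by simp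
      also have "\<dots> \<le> (lam0 / real k ^ m) * C"
        using norm_diff_ccube[OF uc, of q1] vq1(2) Kc lam0p kn_pos[of m] unfolding C_def
        by (intro mult_left_mono) auto
      also have "\<dots> < \<rho>2" using cellrad by simp
      finally show ?thesis by (simp add: dist_norm)
    qed
    have hS_M: "norm (h (Sv u)) \<le> M" if uc: "u \<in> ccube" for u
    proof -
      have "dist b (h (Sv u)) < \<rho>2" using hS_ball[OF uc] by simp
      moreover have "norm (h (Sv u)) \<le> norm b + dist b (h (Sv u))"
        using norm_triangle_sub[of "h (Sv u)" b] by (simp add: dist_norm norm_minus_commute)
      ultimately show ?thesis unfolding M_def using norm_ge_zero[of a] r1 by linarith
    qed
    have Sv_oc: "Sv w \<in> ocube" if "w \<in> ocube" for w
      unfolding Sv_def aff_def using cell_ocube[OF that vprops(2) k1] .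
    have z0W: "intvec z0" using q0z0(2) FW unfolding W_def by blast
    have claim: "T \<inter> h ` Sv ` U = h ` Sv ` (K \<inter> U)" if Uoc: "U \<subseteq> ocube" for U
    proof
      show "h ` Sv ` (K \<inter> U) \<subseteq> T \<inter> h ` Sv ` U"
      proof
        fix t assume "t \<in> h ` Sv ` (K \<inter> U)"
        then obtain w where w: "w \<in> K" "w \<in> U" "t = h (Sv w)" by blast
        have SK: "Sv w \<in> K" unfolding Sv_def aff_def using addr_in[OF KP k1 vq1(1) w(1)] .
        have "t = lam0 *\<^sub>R (Sv w + z0 - ff)" unfolding w(3) h_def aff_def by (simp add: algebra_simps)
        hence "t \<in> YF" unfolding YF_def using SK q0z0(2) by blast
        moreover have "norm t \<le> M" unfolding w(3) using hS_M w(2) Uoc ocube_ccube by blast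
        ultimately have "t \<in> T" using key by blast
        thus "t \<in> T \<inter> h ` Sv ` U" using w by blast
      qed
    next
      show "T \<inter> h ` Sv ` U \<subseteq> h ` Sv ` (K \<inter> U)"
      proof
        fix t assume tt: "t \<in> T \<inter> h ` Sv ` U"
        then obtain w where w: "w \<in> U" "t = h (Sv w)" by blast
        have woc: "w \<in> ocube" using w(1) Uoc by blast
        have "norm t \<le> M" unfolding w(2) using hS_M woc ocube_ccube by blast
        hence "t \<in> YF" using key tt by blast
        then obtain q' z' where qz': "q' \<in> K" "z' \<in> F" "t = lam0 *\<^sub>R (q' + z' - ff)" unfolding YF_def by blast
        have "lam0 *\<^sub>R (q' + z' - ff) = lam0 *\<^sub>R (Sv w + z0 - ff)"
          using qz'(3) w(2) unfolding h_def aff_def by (simp add: algebra_simps)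
        hence "q' + z' - ff = Sv w + z0 - ff" using lam0p by simp
        hence e1: "q' + z' = Sv w + z0" by simp
        have "intvec z'" using qz'(2) FW unfolding W_def by blast
        hence "z' = z0" using cube_disj[OF _ z0W _ Sv_oc[OF woc] e1] qz'(1) Kc by blast
        hence q'S: "q' = Sv w" using e1 by simp
        obtain v' q'' where vq: "v' \<in> addr k P m" "q'' \<in> K" "q' = (1 / real k ^ m) *\<^sub>R (q'' + v')"
          using addr_cover[OF KP k1 qz'(1), of m] by blast
        have "(1 / real k ^ m) *\<^sub>R (q'' + v') = (1 / real k ^ m) *\<^sub>R (w + v)"
          using q'S vq(3) unfolding Sv_def aff_def by simp
        hence e2: "q'' + v' = w + v" using k1 by simp
        have "intvec v'" using addr_props[OF P k1 vq(1)] by blast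
        hence "v' = v" using cube_disj[OF _ vprops(1) _ woc e2] vq(2) Kc by blast
        hence "q'' = w" using e2 by simp
        hence "w \<in> K" using vq(2) by simp
        thus "t \<in> h ` Sv ` (K \<inter> U)" using w by blast
      qed
    qed
    have xoc: "x \<in> ocube" using assms(3) unfolding ocube_def by blast
    obtain \<delta>0 where d0: "\<delta>0 > 0" "ball x \<delta>0 \<subseteq> ocube" using open_ocube xoc open_contains_ball by blast
    define Q where "Q = (norm a + 2 * C + \<rho>1 + 1) * real k"
    have Qp: "Q > 0" unfolding Q_def using k r1 C1 by (simp add: add_nonneg_pos)
    have "min 1 (\<delta>0 / Q) > 0" using d0 Qp by simp
    then obtain N where N: "\<forall>j\<ge>N. dist (r (\<tau> j)) 0 < min 1 (\<delta>0 / Q)" using rt unfolding lim_sequentially by blast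
    define jj where "jj = \<tau> N"
    have rjj: "r jj < 1" "r jj < \<delta>0 / Q" using N rpos unfolding jj_def dist_real_def by auto
    define nn where "nn = n jj"
    define DD where "DD = D jj"
    have knn: "real k ^ nn > 0" using kn_pos by simp
    have invk: "1 / real k ^ nn \<le> real k * r jj" unfolding nn_def using inv_kn rjj(1) by simp
    define \<phi> where "\<phi> = aff (1 / (lam0 * real k ^ nn)) (lam0 *\<^sub>R (ff + DD))"
    have phic: "1 / (lam0 * real k ^ nn) > 0" using lam0p knn by simp
    have phi_eq: "\<phi> (lam0 *\<^sub>R (q + (a' - DD) - ff)) = (1 / real k ^ nn) *\<^sub>R (q + a')" for q a'
    proof -
      have "lam0 *\<^sub>R (q + (a' - DD) - ff) + lam0 *\<^sub>R (ff + DD) = lam0 *\<^sub>R (q + a')" by (simp add: algebra_simps)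
      moreover have "(1 / (lam0 * real k ^ nn)) * lam0 = 1 / real k ^ nn" using lam0p by simp
      ultimately show ?thesis unfolding \<phi>_def aff_def by simp
    qed
    have fj_eq: "f jj = real k ^ nn *\<^sub>R x - DD" unfolding f_def nn_def DD_def ..
    have normB: "norm y \<le> norm a + \<rho>1" if "y \<in> ball a \<rho>1" for y
    proof -
      have "norm y \<le> norm a + norm (y - a)" using norm_triangle_sub[of y a] .
      moreover have "norm (y - a) < \<rho>1" using that by (simp add: dist_norm norm_minus_commute)
      ultimately show ?thesis by linarith
    qed
    have nly: "norm ((1 / lam0) *\<^sub>R y) \<le> norm y" for y
    proof -
      have "norm ((1 / lam0) *\<^sub>R y) = norm y / lam0" using lam0p by simp
      also have "\<dots> \<le> norm y" using lam0_ge by (intro div_le_self) simp_all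
      finally show ?thesis .
    qed
    have phiB: "\<phi> ` ball a \<rho>1 \<subseteq> ocube"
    proof
      fix u assume "u \<in> \<phi> ` ball a \<rho>1"
      then obtain y where y: "y \<in> ball a \<rho>1" "u = \<phi> y" by blast
      have e: "\<phi> y - x = (1 / real k ^ nn) *\<^sub>R ((1 / lam0) *\<^sub>R y + (ff - f jj))"
        unfolding fj_eq \<phi>_def aff_def using lam0p knn by (simp add: vec_eq_iff field_simps)
      have "norm ((1 / lam0) *\<^sub>R y + (ff - f jj)) \<le> norm ((1 / lam0) *\<^sub>R y) + norm (ff - f jj)"
        by (rule norm_triangle_ineq)
      also have "\<dots> \<le> norm y + (norm ff + norm (f jj))" using nly[of y] norm_triangle_ineq4[of ff "f jj"] by linarith
      also have "\<dots> \<le> norm a + \<rho>1 + 2 * C" using normB[OF y(1)] ffC normf[of jj] by linarith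
      finally have n1: "norm ((1 / lam0) *\<^sub>R y + (ff - f jj)) \<le> norm a + \<rho>1 + 2 * C" .
      have "norm (\<phi> y - x) = (1 / real k ^ nn) * norm ((1 / lam0) *\<^sub>R y + (ff - f jj))"
        unfolding e using knn by simp
      also have "\<dots> \<le> (real k * r jj) * (norm a + \<rho>1 + 2 * C)"
        using n1 invk knn rpos[rule_format, of jj] by (intro mult_mono) auto
      also have "\<dots> < (real k * r jj) * (norm a + \<rho>1 + 2 * C + 1)"
        using rpos k by (intro mult_strict_left_mono) auto
      also have "\<dots> = r jj * Q" unfolding Q_def by (simp add: algebra_simps)
      also have "\<dots> < \<delta>0" using rjj(2) Qp by (simp add: less_divide_eq)
      finally have "dist x (\<phi> y) < \<delta>0" by (simp add: dist_norm norm_minus_commute)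
      thus "u \<in> ocube" using d0(2) y(2) by auto
    qed
    have ZsF: "Zs jj \<inter> W = F" unfolding jj_def by (rule ZF)
    have Kphi: "K \<inter> \<phi> ` ball a \<rho>1 = \<phi> ` (ball a \<rho>1 \<inter> YF)"
    proof
      show "K \<inter> \<phi> ` ball a \<rho>1 \<subseteq> \<phi> ` (ball a \<rho>1 \<inter> YF)"
      proof
        fix u assume u: "u \<in> K \<inter> \<phi> ` ball a \<rho>1"
        then obtain y where y: "y \<in> ball a \<rho>1" "u = \<phi> y" by blast
        obtain a' q where aq: "a' \<in> addr k P nn" "q \<in> K" "u = (1 / real k ^ nn) *\<^sub>R (q + a')"
          using addr_cover[OF KP k1, of u nn] u by blast
        have "\<phi> (lam0 *\<^sub>R (q + (a' - DD) - ff)) = \<phi> y" using phi_eq aq(3) y(2) by simp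
        hence yeq: "y = lam0 *\<^sub>R (q + (a' - DD) - ff)" unfolding \<phi>_def using aff_inj phic by (metis less_irrefl)
        have zZ: "a' - DD \<in> Zs jj" unfolding Zs_def DD_def nn_def[symmetric] using aq(1) by blast
        have "(1 / lam0) *\<^sub>R y = q + (a' - DD) - ff" unfolding yeq using lam0p by simp
        hence zeq: "a' - DD = (1 / lam0) *\<^sub>R y + ff - q" by (simp add: algebra_simps)
        have "norm (a' - DD) \<le> norm ((1 / lam0) *\<^sub>R y + ff) + norm q" unfolding zeq by (rule norm_triangle_ineq4)
        also have "\<dots> \<le> norm ((1 / lam0) *\<^sub>R y) + norm ff + norm q"
          using norm_triangle_ineq[of "(1 / lam0) *\<^sub>R y" ff] by linarith
        also have "\<dots> \<le> R" using nly[of y] normB[OF y(1)] ffC normK[OF aq(2)] unfolding R_def M_def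
          using norm_ge_zero[of b] r2 by linarith
        finally have "a' - DD \<in> W" unfolding W_def using Zs_int[OF zZ] by blast
        hence "a' - DD \<in> F" using ZsF zZ by blast
        hence "y \<in> YF" unfolding YF_def yeq using aq(2) by blast
        thus "u \<in> \<phi> ` (ball a \<rho>1 \<inter> YF)" using y by blast
      qed
    next
      show "\<phi> ` (ball a \<rho>1 \<inter> YF) \<subseteq> K \<inter> \<phi> ` ball a \<rho>1"
      proof
        fix u assume "u \<in> \<phi> ` (ball a \<rho>1 \<inter> YF)"
        then obtain y where y: "y \<in> ball a \<rho>1" "y \<in> YF" "u = \<phi> y" by blast
        obtain q z where qz: "q \<in> K" "z \<in> F" "y = lam0 *\<^sub>R (q + z - ff)" using y(2) unfolding YF_def by blast
        have "z \<in> Zs jj" using qz(2) ZsF by blast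
        then obtain a' where a': "a' \<in> addr k P nn" "z = a' - DD" unfolding Zs_def DD_def nn_def by blast
        have "u = (1 / real k ^ nn) *\<^sub>R (q + a')" unfolding y(3) qz(3) a'(2) by (rule phi_eq)
        hence "u \<in> K" using addr_in[OF KP k1 a'(1) qz(1)] by simp
        thus "u \<in> K \<inter> \<phi> ` ball a \<rho>1" using y by blast
      qed
    qed
    define g where "g = (\<lambda>y. h (Sv (\<phi> y)))"
    have km: "1 / real k ^ m > 0" using kn_pos[of m] by simp
    have simg: "similarity g" unfolding g_def h_def Sv_def \<phi>_def
      by (rule similarity_comp[OF similarity_aff[OF lam0p] similarity_comp[OF similarity_aff[OF km] similarity_aff[OF phic]]])
    have gim: "g ` A = h ` Sv ` \<phi> ` A" for A unfolding g_def by (simp add: image_image)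
    have BT: "ball a \<rho>1 \<inter> T = ball a \<rho>1 \<inter> YF"
    proof -
      have "norm y \<le> M" if "y \<in> ball a \<rho>1" for y
      proof -
        have "norm y \<le> norm a + norm (y - a)" using norm_triangle_sub[of y a] .
        moreover have "norm (y - a) < \<rho>1" using that by (simp add: dist_norm norm_minus_commute)
        ultimately show ?thesis unfolding M_def using norm_ge_zero[of b] r2 by linarith
      qed
      thus ?thesis using key by blast
    qed
    have main: "g ` (ball a \<rho>1 \<inter> T) = T \<inter> g ` ball a \<rho>1"
    proof -
      have "g ` (ball a \<rho>1 \<inter> T) = h ` Sv ` \<phi> ` (ball a \<rho>1 \<inter> YF)" unfolding BT gim ..
      also have "\<dots> = h ` Sv ` (K \<inter> \<phi> ` ball a \<rho>1)" unfolding Kphi ..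
      also have "\<dots> = T \<inter> h ` Sv ` \<phi> ` ball a \<rho>1" using claim[OF phiB] by (rule sym)
      also have "\<dots> = T \<inter> g ` ball a \<rho>1" unfolding gim ..
      finally show ?thesis .
    qed
    have opn: "open (g ` ball a \<rho>1)"
    proof -
      have "g ` ball a \<rho>1 = h ` Sv ` \<phi> ` ball a \<rho>1" by (rule gim)
      also have "\<phi> ` ball a \<rho>1 = ball (\<phi> a) (1 / (lam0 * real k ^ nn) * \<rho>1)"
        unfolding \<phi>_def by (rule image_aff_ball[OF phic])
      also have "Sv ` \<dots> = ball (Sv (\<phi> a)) (1 / real k ^ m * (1 / (lam0 * real k ^ nn) * \<rho>1))"
        unfolding Sv_def by (rule image_aff_ball[OF km])
      also have "h ` \<dots> = ball (h (Sv (\<phi> a))) (lam0 * (1 / real k ^ m * (1 / (lam0 * real k ^ nn) * \<rho>1)))"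
        unfolding h_def by (rule image_aff_ball[OF lam0p])
      finally show ?thesis by simp
    qed
    have sub: "g ` ball a \<rho>1 \<subseteq> ball b \<rho>2"
    proof
      fix u assume "u \<in> g ` ball a \<rho>1"
      then obtain y where y: "y \<in> ball a \<rho>1" "u = h (Sv (\<phi> y))" unfolding g_def by blast
      have "\<phi> y \<in> ocube" using phiB y(1) by blast
      hence "\<phi> y \<in> ccube" using ocube_ccube by blast
      from hS_ball[OF this] show "u \<in> ball b \<rho>2" unfolding y(2) .
    qed
    have o2: "openin (top_of_set T) (g ` (ball a \<rho>1 \<inter> T))" unfolding main using opn by (rule openin_open_Int)
    have s2: "g ` (ball a \<rho>1 \<inter> T) \<subseteq> ball b \<rho>2 \<inter> T" unfolding main using sub by blast
    show "\<exists>g. similarity g \<and> g ` (ball a \<rho>1 \<inter> T) \<subseteq> ball b \<rho>2 \<inter> T \<and> openin (top_of_set T) (g ` (ball a \<rho>1 \<inter> T))"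
      using simg s2 o2 by blast
  qed
qed


end
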